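(* Let $G=(V,E)$ be a connected undirected graph (parallel edges allowed) with reactances $r_e>0$ and admittance matrix $\mathbf{A}$, let $\vec{\theta}\in\mathbb{R}^V$ and $\vec{p}=\mathbf{A}\vec{\theta}$. Let $H=(V_H,E_H)$ be a subgraph of $G$, let $F\subseteq E_H$, let $\mathbf{A}'$ be the admittance matrix of $G'=(V,E\setminus F)$ (assumed connected), and let $\vec{\theta}'\in\mathbb{R}^V$ satisfy $\mathbf{A}'\vec{\theta}'=\vec{p}$. Suppose a data distortion attack: the observed vector $\vec{\theta}^{\star}\in\mathbb{R}^V$ satisfies $\theta^{\star}_v=\theta'_v$ for $v\in V\setminus V_H$ and $\vec{\theta}^{\star}_H=\vec{\theta}'_H+\vec{z}$, where $\vec{z}$ is a random vector in $\mathbb{R}^{V_H}$ whose distribution has no positive probability mass on any proper linear subspace. Then for every $i\in\mathrm{int}(\bar H)$, $\mathbf{A}_i\vec{\theta}^{\star}=p_i$.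
   Context: Admittance matrix: for $u\neq v$, $a_{uv}=-\sum_e 1/r_e$ over edges $e$ joining $u,v$ ($0$ if none), $a_{uu}=-\sum_{w\neq u}a_{uw}$; $\mathbf{A}_i$ is the $i$-th row. $\bar H$ denotes the subgraph of $G$ induced by $V\setminus V_H$; $\vec{\theta}_H$ denotes the restriction of $\vec{\theta}$ to $V_H$. For a subgraph $S$ of $G$ with node set $V_S$, $\mathrm{int}(S)=\{i\in V_S: N(i)\subseteq V_S\}$, where $N(i)$ is the set of neighbors of $i$ in $G$. *)

theory Defs
  imports "HOL-Probability.Probability"
begin

definition joins :: "('e \<Rightarrow> 'v \<times> 'v) \<Rightarrow> 'e \<Rightarrow> 'v \<Rightarrow> 'v \<Rightarrow> bool" where
  "joins ends e u v \<longleftrightarrow> ends e = (u, v) \<or> ends e = (v, u)"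

definition wf_graph :: "'v set \<Rightarrow> 'e set \<Rightarrow> ('e \<Rightarrow> 'v \<times> 'v) \<Rightarrow> bool" where
  "wf_graph V E ends \<longleftrightarrow> finite V \<and> finite E \<and>
     (\<forall>e\<in>E. fst (ends e) \<in> V \<and> snd (ends e) \<in> V)"

definition adjacent :: "'e set \<Rightarrow> ('e \<Rightarrow> 'v \<times> 'v) \<Rightarrow> 'v \<Rightarrow> 'v \<Rightarrow> bool" where
  "adjacent E ends u v \<longleftrightarrow> u \<noteq> v \<and> (\<exists>e\<in>E. joins ends e u v)"

definition neighbors :: "'e set \<Rightarrow> ('e \<Rightarrow> 'v \<times> 'v) \<Rightarrow> 'v \<Rightarrow> 'v set" where
  "neighbors E ends i = {j. adjacent E ends i j}"

definition graph_connected :: "'v set \<Rightarrow> 'e set \<Rightarrow> ('e \<Rightarrow> 'v \<times> 'v) \<Rightarrow> bool" where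
  "graph_connected V E ends \<longleftrightarrow>
     (\<forall>u\<in>V. \<forall>v\<in>V. (u, v) \<in> {(x, y). adjacent E ends x y}\<^sup>*)"

definition adm_off :: "'e set \<Rightarrow> ('e \<Rightarrow> 'v \<times> 'v) \<Rightarrow> ('e \<Rightarrow> real) \<Rightarrow> 'v \<Rightarrow> 'v \<Rightarrow> real" where
  "adm_off E ends r u v = - (\<Sum>e\<in>{e\<in>E. joins ends e u v}. 1 / r e)"

definition admittance :: "'v set \<Rightarrow> 'e set \<Rightarrow> ('e \<Rightarrow> 'v \<times> 'v) \<Rightarrow> ('e \<Rightarrow> real) \<Rightarrow> 'v \<Rightarrow> 'v \<Rightarrow> real" where
  "admittance V E ends r u v =
     (if u \<noteq> v then adm_off E ends r u v
      else - (\<Sum>w\<in>V - {u}. adm_off E ends r u w))"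

definition row_apply :: "'v set \<Rightarrow> ('v \<Rightarrow> 'v \<Rightarrow> real) \<Rightarrow> 'v \<Rightarrow> ('v \<Rightarrow> real) \<Rightarrow> real" where
  "row_apply V A i \<theta> = (\<Sum>j\<in>V. A i j * \<theta> j)"

definition interior_nodes :: "'e set \<Rightarrow> ('e \<Rightarrow> 'v \<times> 'v) \<Rightarrow> 'v set \<Rightarrow> 'v set" where
  "interior_nodes E ends VS = {i\<in>VS. neighbors E ends i \<subseteq> VS}"

text \<open>R^{V_H}, represented as functions vanishing outside V_H, and its linear subspaces.\<close>
definition coord_space :: "'v set \<Rightarrow> ('v \<Rightarrow> real) set" where
  "coord_space VH = {f. \<forall>v. v \<notin> VH \<longrightarrow> f v = 0}"

definition lin_subspace :: "('v \<Rightarrow> real) set \<Rightarrow> bool" where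
  "lin_subspace S \<longleftrightarrow> (\<lambda>_. 0) \<in> S \<and> (\<forall>x\<in>S. \<forall>y\<in>S. (\<lambda>v. x v + y v) \<in> S) \<and>
     (\<forall>c. \<forall>x\<in>S. (\<lambda>v. c * x v) \<in> S)"

end

theory Submission
  imports Defs
begin

theorem lemma5p1:
  fixes V :: "'v set" and E :: "'e set" and ends :: "'e \<Rightarrow> 'v \<times> 'v" and r :: "'e \<Rightarrow> real"
    and \<theta> \<theta>' p :: "'v \<Rightarrow> real" and VH :: "'v set" and EH F :: "'e set"
    and M :: "'w measure" and z :: "'w \<Rightarrow> 'v \<Rightarrow> real" and \<theta>s :: "'w \<Rightarrow> 'v \<Rightarrow> real"
  assumes G: "wf_graph V E ends" and conn: "graph_connected V E ends"
    and r_pos: "\<forall>e\<in>E. r e > 0"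
    and p_def: "\<forall>i\<in>V. p i = row_apply V (admittance V E ends r) i \<theta>"
    and H: "VH \<subseteq> V" "EH \<subseteq> E" "\<forall>e\<in>EH. fst (ends e) \<in> VH \<and> snd (ends e) \<in> VH"
    and F: "F \<subseteq> EH"
    and conn': "graph_connected V (E - F) ends"
    and \<theta>': "\<forall>i\<in>V. row_apply V (admittance V (E - F) ends r) i \<theta>' = p i"
    and M: "prob_space M"
    and z_range: "\<forall>\<omega>\<in>space M. z \<omega> \<in> coord_space VH"
    and z_distr: "\<forall>S. lin_subspace S \<and> S \<subseteq> coord_space VH \<and> S \<noteq> coord_space VH
                    \<longrightarrow> measure M {\<omega>\<in>space M. z \<omega> \<in> S} = 0"
    and attack_out: "\<forall>\<omega>\<in>space M. \<forall>v\<in>V - VH. \<theta>s \<omega> v = \<theta>' v"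
    and attack_in: "\<forall>\<omega>\<in>space M. \<forall>v\<in>VH. \<theta>s \<omega> v = \<theta>' v + z \<omega> v"
  shows "\<forall>\<omega>\<in>space M. \<forall>i\<in>interior_nodes E ends (V - VH).
           row_apply V (admittance V E ends r) i (\<theta>s \<omega>) = p i"
proof (intro ballI)
  fix \<omega> i assume w: "\<omega> \<in> space M" and i: "i \<in> interior_nodes E ends (V - VH)"
  hence iV: "i \<in> V" "i \<notin> VH" and nb: "neighbors E ends i \<subseteq> V - VH"
    by (auto simp: interior_nodes_def)
  have offeq: "adm_off E ends r i j = adm_off (E - F) ends r i j" for j
  proof -
    have "{e\<in>E. joins ends e i j} = {e\<in>E - F. joins ends e i j}"
      using F H(3) iV(2) by (auto simp: joins_def) (metis fst_conv snd_conv subsetD)+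
    thus ?thesis by (simp add: adm_off_def)
  qed
  have admeq: "admittance V E ends r i j = admittance V (E - F) ends r i j" for j
    using offeq by (auto simp: admittance_def)
  have termeq: "admittance V E ends r i j * \<theta>s \<omega> j = admittance V (E - F) ends r i j * \<theta>' j"
    if j: "j \<in> V" for j
  proof (cases "j \<in> VH")
    case True
    hence ne: "i \<noteq> j" using iV by auto
    have "\<not> adjacent E ends i j" using nb True by (auto simp: neighbors_def)
    hence "{e\<in>E. joins ends e i j} = {}" using ne by (auto simp: adjacent_def)
    hence "admittance V E ends r i j = 0" using ne unfolding admittance_def adm_off_def by (simp only: if_True sum.empty) simp
    thus ?thesis using admeq by simp
  next
    case False
    thus ?thesis using attack_out w j admeq by simp
  qed
  have "row_apply V (admittance V E ends r) i (\<theta>s \<omega>) = row_apply V (admittance V (E - F) ends r) i \<theta>'"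
    unfolding row_apply_def using termeq by (rule sum.cong[OF refl])
  also have "... = p i" using \<theta>' iV by simp
  finally show "row_apply V (admittance V E ends r) i (\<theta>s \<omega>) = p i" .
qed

end
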